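(* Let $n\ge3$, $1\le d\le n-2$, $D=\binom{n-1}{d}$. Let $H$ be the graph whose vertices are the labeled $d$-out-regular digraphs on $[n]$, two distinct digraphs being adjacent iff one is obtained from the other by changing the out-neighborhood of a single vertex, and let $m_G(G')=\frac1{n(D-1)+1}$ if $G'=G$ or $G'$ is adjacent to $G$, and $0$ otherwise. Then $\kappa(G_1,G_2)\ge\frac1n$ for all distinct $G_1,G_2\in V(H)$.
   Context: A directed graph here has no loops and no multiple arcs; it is $d$-out-regular if every vertex has out-degree $d$. For a graph $H$ with random walk $m$ (each $m_x$ a probability distribution supported on $x$ and its neighbors), $d_H$ the graph distance on $H$, the transportation distance is $W(m_1,m_2)=\inf_A\sum_{x,y}A(x,y)d_H(x,y)$ over couplings $A$ of $m_1,m_2$, and the Ollivier Ricci curvature is $\kappa(x,y)=1-W(m_x,m_y)/d_H(x,y)$. *)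

theory Defs
  imports Complex_Main
begin

text \<open>A labeled digraph on [n] = {0..<n} (no loops, no multiple arcs) is represented by
its out-neighbourhood function G :: nat \<Rightarrow> nat set, with G i \<subseteq> {0..<n} - {i}
for i < n and G i = {} for i \<ge> n (canonical representation).\<close>

definition out_regular_digraphs :: "nat \<Rightarrow> nat \<Rightarrow> (nat \<Rightarrow> nat set) set" where
  "out_regular_digraphs n d =
     {G. (\<forall>i<n. G i \<subseteq> {0..<n} - {i} \<and> card (G i) = d) \<and> (\<forall>i. n \<le> i \<longrightarrow> G i = {})}"

definition adjH :: "nat \<Rightarrow> nat \<Rightarrow> (nat \<Rightarrow> nat set) \<Rightarrow> (nat \<Rightarrow> nat set) \<Rightarrow> bool" where
  "adjH n d G G' \<longleftrightarrow> G \<in> out_regular_digraphs n d \<and> G' \<in> out_regular_digraphs n d \<and>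
     G \<noteq> G' \<and> (\<exists>v. \<forall>u. u \<noteq> v \<longrightarrow> G u = G' u)"

definition graph_dist :: "('a \<Rightarrow> 'a \<Rightarrow> bool) \<Rightarrow> 'a \<Rightarrow> 'a \<Rightarrow> nat" where
  "graph_dist adj x y = (LEAST k. (adj ^^ k) x y)"

definition walkH :: "nat \<Rightarrow> nat \<Rightarrow> (nat \<Rightarrow> nat set) \<Rightarrow> (nat \<Rightarrow> nat set) \<Rightarrow> real" where
  "walkH n d G G' =
     (if G \<in> out_regular_digraphs n d \<and> (G' = G \<or> adjH n d G G')
      then 1 / (real n * (real (n - 1 choose d) - 1) + 1) else 0)"

definition coupling :: "'a set \<Rightarrow> ('a \<Rightarrow> real) \<Rightarrow> ('a \<Rightarrow> real) \<Rightarrow> ('a \<Rightarrow> 'a \<Rightarrow> real) \<Rightarrow> bool" where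
  "coupling V m1 m2 A \<longleftrightarrow> (\<forall>x\<in>V. \<forall>y\<in>V. 0 \<le> A x y) \<and>
     (\<forall>x\<in>V. (\<Sum>y\<in>V. A x y) = m1 x) \<and> (\<forall>y\<in>V. (\<Sum>x\<in>V. A x y) = m2 y)"

definition transport_dist :: "'a set \<Rightarrow> ('a \<Rightarrow> 'a \<Rightarrow> real) \<Rightarrow> ('a \<Rightarrow> real) \<Rightarrow> ('a \<Rightarrow> real) \<Rightarrow> real" where
  "transport_dist V \<delta> m1 m2 =
     Inf {(\<Sum>x\<in>V. \<Sum>y\<in>V. A x y * \<delta> x y) | A. coupling V m1 m2 A}"

definition ollivier_ricci :: "'a set \<Rightarrow> ('a \<Rightarrow> 'a \<Rightarrow> bool) \<Rightarrow> ('a \<Rightarrow> 'a \<Rightarrow> real) \<Rightarrow> 'a \<Rightarrow> 'a \<Rightarrow> real" where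
  "ollivier_ricci V adj m x y =
     1 - transport_dist V (\<lambda>u v. real (graph_dist adj u v)) (m x) (m y) / real (graph_dist adj x y)"

end

theory Submission
  imports Defs
begin


definition Om :: "nat \<Rightarrow> nat \<Rightarrow> nat \<Rightarrow> nat set set" where
  "Om n d j = {s. s \<subseteq> {0..<n} - {j} \<and> card s = d}"
definition dset :: "(nat \<Rightarrow> nat set) \<Rightarrow> (nat \<Rightarrow> nat set) \<Rightarrow> nat set" where
  "dset u v = {i. u i \<noteq> v i}"
definition ham where "ham u v = card (dset u v)"

lemma V_iff: "G \<in> out_regular_digraphs n d \<longleftrightarrow> (\<forall>i<n. G i \<in> Om n d i) \<and> (\<forall>i. n \<le> i \<longrightarrow> G i = {})"
  by (auto simp: out_regular_digraphs_def Om_def)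

lemma upd_V: "G \<in> out_regular_digraphs n d \<Longrightarrow> j < n \<Longrightarrow> s \<in> Om n d j \<Longrightarrow> G(j:=s) \<in> out_regular_digraphs n d"
  by (auto simp: V_iff)

lemma finite_V: "finite (out_regular_digraphs n d)"
proof -
  have "out_regular_digraphs n d \<subseteq> {f. \<forall>x. (x \<in> {..<n} \<longrightarrow> f x \<in> Pow {0..<n}) \<and> (x \<notin> {..<n} \<longrightarrow> f x = {})}"
  proof
    fix G assume G: "G \<in> out_regular_digraphs n d"
    have "\<forall>x. (x \<in> {..<n} \<longrightarrow> G x \<in> Pow {0..<n}) \<and> (x \<notin> {..<n} \<longrightarrow> G x = {})"
    proof (intro allI conjI impI)
      fix x assume "x \<in> {..<n}"
      then have "G x \<subseteq> {0..<n} - {x}" using G unfolding out_regular_digraphs_def by simp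
      then show "G x \<in> Pow {0..<n}" by blast
    next
      fix x assume "x \<notin> {..<n}"
      then show "G x = {}" using G unfolding out_regular_digraphs_def by simp
    qed
    then show "G \<in> {f. \<forall>x. (x \<in> {..<n} \<longrightarrow> f x \<in> Pow {0..<n}) \<and> (x \<notin> {..<n} \<longrightarrow> f x = {})}" by simp
  qed
  moreover have "finite {f. \<forall>x. (x \<in> {..<n} \<longrightarrow> f x \<in> Pow {0..<n}) \<and> (x \<notin> {..<n} \<longrightarrow> f x = {})}"
    by (rule finite_set_of_finite_funs) auto
  ultimately show ?thesis by (rule finite_subset)
qed

lemma card_Om: "j < n \<Longrightarrow> card (Om n d j) = (n - 1 choose d)"
proof -
  assume j: "j < n"
  have c: "card ({0..<n} - {j}) = n - 1" using j by simp
  have "card {B. B \<subseteq> {0..<n} - {j} \<and> card B = d} = card ({0..<n} - {j}) choose d"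
    by (rule n_subsets) simp
  then show ?thesis unfolding Om_def c .
qed

lemma finite_Om: "finite (Om n d j)"
proof -
  have "Om n d j \<subseteq> Pow {0..<n}" unfolding Om_def by blast
  then show ?thesis using finite_subset by blast
qed

lemma dset_sub: "u \<in> out_regular_digraphs n d \<Longrightarrow> v \<in> out_regular_digraphs n d \<Longrightarrow> dset u v \<subseteq> {..<n}"
proof
  fix i assume u: "u \<in> out_regular_digraphs n d" and v: "v \<in> out_regular_digraphs n d" and i: "i \<in> dset u v"
  show "i \<in> {..<n}"
  proof (rule ccontr)
    assume "i \<notin> {..<n}"
    then have "n \<le> i" by simp
    then have "u i = {}" "v i = {}" using u v by (simp_all add: out_regular_digraphs_def)
    then show False using i unfolding dset_def by simp
  qed
qed

lemma finite_dset: "u \<in> out_regular_digraphs n d \<Longrightarrow> v \<in> out_regular_digraphs n d \<Longrightarrow> finite (dset u v)"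
  by (rule finite_subset[OF dset_sub]) simp_all

lemma dset_sym: "dset u v = dset v u" unfolding dset_def by metis

lemma dset_empty: "dset u v = {} \<longleftrightarrow> u = v"
  unfolding dset_def fun_eq_iff by blast

lemma ham_0: "u \<in> out_regular_digraphs n d \<Longrightarrow> v \<in> out_regular_digraphs n d \<Longrightarrow> ham u v = 0 \<longleftrightarrow> u = v"
proof -
  assume "u \<in> out_regular_digraphs n d" "v \<in> out_regular_digraphs n d"
  then have f: "finite (dset u v)" by (rule finite_dset)
  have "ham u v = 0 \<longleftrightarrow> dset u v = {}" unfolding ham_def using f by simp
  then show ?thesis using dset_empty by simp
qed

lemma adj_iff: "adjH n d u v \<longleftrightarrow> u \<in> out_regular_digraphs n d \<and> v \<in> out_regular_digraphs n d \<and> ham u v = 1"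
proof
  assume a: "adjH n d u v"
  then obtain w where w: "\<forall>z. z \<noteq> w \<longrightarrow> u z = v z" and ne: "u \<noteq> v" and V: "u \<in> out_regular_digraphs n d" "v \<in> out_regular_digraphs n d"
    unfolding adjH_def by blast
  have "dset u v \<subseteq> {w}" using w unfolding dset_def by blast
  moreover have "dset u v \<noteq> {}" using ne dset_empty by blast
  ultimately have "dset u v = {w}" by blast
  then show "u \<in> out_regular_digraphs n d \<and> v \<in> out_regular_digraphs n d \<and> ham u v = 1" using V by (simp add: ham_def)
next
  assume a: "u \<in> out_regular_digraphs n d \<and> v \<in> out_regular_digraphs n d \<and> ham u v = 1"
  then obtain w where w: "dset u v = {w}" unfolding ham_def by (meson card_1_singletonE)
  then have "\<forall>z. z \<noteq> w \<longrightarrow> u z = v z" unfolding dset_def by blast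
  moreover have "u \<noteq> v" using w dset_empty by blast
  ultimately show "adjH n d u v" using a unfolding adjH_def by blast
qed

lemma ham_tri: "u \<in> out_regular_digraphs n d \<Longrightarrow> v \<in> out_regular_digraphs n d \<Longrightarrow> w \<in> out_regular_digraphs n d \<Longrightarrow> ham u v \<le> ham u w + ham w v"
proof -
  assume V: "u \<in> out_regular_digraphs n d" "v \<in> out_regular_digraphs n d" "w \<in> out_regular_digraphs n d"
  have sub: "dset u v \<subseteq> dset u w \<union> dset w v" unfolding dset_def by blast
  have fin: "finite (dset u w \<union> dset w v)" using finite_dset[OF V(1) V(3)] finite_dset[OF V(3) V(2)] by blast
  have "card (dset u v) \<le> card (dset u w \<union> dset w v)" using card_mono[OF fin sub] .
  also have "\<dots> \<le> card (dset u w) + card (dset w v)" by (rule card_Un_le)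
  finally show ?thesis by (simp add: ham_def)
qed

lemma relpow_ham: "(adjH n d ^^ k) u v \<Longrightarrow> u \<in> out_regular_digraphs n d \<Longrightarrow> v \<in> out_regular_digraphs n d \<Longrightarrow> ham u v \<le> k"
proof (induction k arbitrary: v)
  case 0
  then show ?case by (simp add: ham_0)
next
  case (Suc k)
  from Suc.prems(1) obtain w where w: "(adjH n d ^^ k) u w" "adjH n d w v" by (rule relpowp_Suc_E)
  then have wV: "w \<in> out_regular_digraphs n d" and h1: "ham w v = 1" by (auto simp: adj_iff)
  have "ham u w \<le> k" using Suc.IH[OF w(1) Suc.prems(2) wV] .
  then show ?case using ham_tri[OF Suc.prems(2,3) wV] h1 by simp
qed

lemma path_ham: "u \<in> out_regular_digraphs n d \<Longrightarrow> v \<in> out_regular_digraphs n d \<Longrightarrow> (adjH n d ^^ ham u v) u v"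
proof (induction "ham u v" arbitrary: v)
  case 0
  then show ?case using ham_0[of u n d v] by simp
next
  case (Suc m)
  from Suc.hyps(2) have "dset u v \<noteq> {}" by (auto simp: ham_def)
  then obtain i where i: "u i \<noteq> v i" by (auto simp: dset_def)
  have iV: "i < n" using i Suc.prems by (auto simp: V_iff)
  define w where "w = v(i := u i)"
  have wV: "w \<in> out_regular_digraphs n d" unfolding w_def using Suc.prems iV by (intro upd_V) (auto simp: V_iff)
  have "dset u w = dset u v - {i}" by (auto simp: dset_def w_def)
  then have hw: "ham u w = m" using Suc.hyps(2) i finite_dset[OF Suc.prems] by (simp add: ham_def dset_def)
  have "dset w v = {i}" using i by (auto simp: dset_def w_def)
  then have "adjH n d w v" using wV Suc.prems by (simp add: adj_iff ham_def)
  moreover have "(adjH n d ^^ m) u w" using Suc.hyps(1)[OF hw[symmetric] Suc.prems(1) wV] hw by simp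
  ultimately show ?case using Suc.hyps(2) by (metis relpowp_Suc_I)
qed

lemma gdist: "u \<in> out_regular_digraphs n d \<Longrightarrow> v \<in> out_regular_digraphs n d \<Longrightarrow> graph_dist (adjH n d) u v = ham u v"
  unfolding graph_dist_def
  by (rule Least_equality) (auto intro: path_ham relpow_ham)



abbreviation VV where "VV n d \<equiv> out_regular_digraphs n d"

definition NN :: "nat \<Rightarrow> nat \<Rightarrow> (nat \<Rightarrow> nat set) \<Rightarrow> (nat \<Rightarrow> nat set) \<Rightarrow> (nat \<Rightarrow> nat set) set" where
  "NN n d x y = {x(j:=s) | j s. j<n \<and> s \<in> Om n d j \<and> s \<noteq> x j \<and> s \<noteq> y j}"
definition Sp :: "(nat \<Rightarrow> nat set) \<Rightarrow> (nat \<Rightarrow> nat set) \<Rightarrow> (nat \<Rightarrow> nat set) set" where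
  "Sp x y = {x(j := y j) | j. j \<in> dset x y}"
definition sig :: "(nat \<Rightarrow> nat set) \<Rightarrow> (nat \<Rightarrow> nat set) \<Rightarrow> (nat \<Rightarrow> nat set) \<Rightarrow> (nat \<Rightarrow> nat set)" where
  "sig x y u = (\<lambda>i. if u i = x i then y i else u i)"
definition I3 :: "(nat \<Rightarrow> nat set) \<Rightarrow> (nat \<Rightarrow> nat set) \<Rightarrow> (nat \<Rightarrow> nat set) \<Rightarrow> (nat \<Rightarrow> nat set) \<Rightarrow> bool" where
  "I3 x y u v \<longleftrightarrow> (\<exists>j\<in>dset x y. \<exists>l\<in>dset x y. j \<noteq> l \<and> u = x(j:=y j) \<and> v = y(l := x l))"

lemma ham_upd: "ham x (x(j:=s)) = (if s = x j then 0 else 1)"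
proof -
  have "dset x (x(j:=s)) = (if s = x j then {} else {j})" by (auto simp: dset_def)
  then show ?thesis by (simp add: ham_def)
qed

lemma ball_char:
  assumes xV: "x \<in> VV n d" and yV: "y \<in> VV n d"
  shows "(u \<in> VV n d \<and> ham x u \<le> 1) \<longleftrightarrow> (u = x \<or> u \<in> NN n d x y \<or> u \<in> Sp x y)"
proof
  assume a: "u \<in> VV n d \<and> ham x u \<le> 1"
  show "u = x \<or> u \<in> NN n d x y \<or> u \<in> Sp x y"
  proof (cases "ham x u = 0")
    case True then show ?thesis using ham_0 xV a by blast
  next
    case False
    then have "ham x u = 1" using a by simp
    then obtain j where j: "dset x u = {j}" by (auto simp: ham_def card_Suc_eq)
    then have jn: "j < n" using dset_sub[OF xV] a by blast
    have uj: "u j \<in> Om n d j" using a jn by (auto simp: V_iff)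
    have ne: "u j \<noteq> x j" using j by (auto simp: dset_def)
    have ueq: "u = x(j := u j)" using j by (auto simp: dset_def fun_eq_iff)
    show ?thesis
    proof (cases "u j = y j")
      case True
      then have "j \<in> dset x y" using ne by (simp add: dset_def)
      then show ?thesis using ueq True by (auto simp: Sp_def)
    next
      case False
      then show ?thesis using ueq ne uj jn unfolding NN_def by blast
    qed
  qed
next
  assume "u = x \<or> u \<in> NN n d x y \<or> u \<in> Sp x y"
  then show "u \<in> VV n d \<and> ham x u \<le> 1"
  proof (elim disjE)
    assume "u = x" then show ?thesis using xV ham_0[OF xV xV] by simp
  next
    assume "u \<in> NN n d x y"
    then obtain j s where "j<n" "s \<in> Om n d j" "s \<noteq> x j" "u = x(j:=s)" by (auto simp: NN_def)
    then show ?thesis using xV upd_V ham_upd by auto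
  next
    assume "u \<in> Sp x y"
    then obtain j where j: "j \<in> dset x y" "u = x(j := y j)" by (auto simp: Sp_def)
    then have "j < n" using dset_sub[OF xV yV] by blast
    then show ?thesis using j xV yV upd_V[OF xV] ham_upd by (auto simp: V_iff)
  qed
qed

lemma x_notin_NN: "x \<notin> NN n d x y"
proof
  assume "x \<in> NN n d x y"
  then obtain j s where js: "s \<noteq> x j" "x = x(j:=s)" unfolding NN_def by blast
  have "x j = (x(j:=s)) j" using js(2) by (rule arg_cong)
  then show False using js(1) by simp
qed

lemma x_notin_Sp: "x \<notin> Sp x y"
proof
  assume "x \<in> Sp x y"
  then obtain j where js: "j \<in> dset x y" "x = x(j:=y j)" unfolding Sp_def by blast
  have "x j = (x(j:=y j)) j" using js(2) by (rule arg_cong)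
  then show False using js(1) by (simp add: dset_def)
qed

lemma NN_Sp_disj: "NN n d x y \<inter> Sp x y = {}"
proof (safe)
  fix u
  assume u1: "u \<in> NN n d x y" and u2: "u \<in> Sp x y"
  from u1 obtain j s where a1: "s \<noteq> y j" "u = x(j:=s)" unfolding NN_def by blast
  from u2 obtain l where a2: "l \<in> dset x y" "u = x(l := y l)" unfolding Sp_def by blast
  note a = a1 a2
  show "u \<in> {}"
  proof (cases "j = l")
    case True
    have "u j = s" using a1(2) by simp
    moreover have "u j = y j" using a2(2) True by simp
    ultimately show ?thesis using a1(1) by simp
  next
    case False
    then have "u l = x l" using a1(2) by simp
    moreover have "u l = y l" using a2(2) by simp
    moreover have "x l \<noteq> y l" using a2(1) by (simp add: dset_def)
    ultimately show ?thesis by simp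
  qed
qed

lemma walk_eq:
  assumes xV: "x \<in> VV n d"
  shows "walkH n d x u = (if u \<in> VV n d \<and> ham x u \<le> 1 then 1 / (real n * (real (n - 1 choose d) - 1) + 1) else 0)"
proof -
  have "(u = x \<or> adjH n d x u) \<longleftrightarrow> (u \<in> VV n d \<and> ham x u \<le> 1)"
    using xV ham_0[OF xV, of u] by (auto simp: adj_iff)
  then show ?thesis using xV by (simp add: walkH_def)
qed

lemma sig_upd: "s \<noteq> x j \<Longrightarrow> sig x y (x(j:=s)) = y(j:=s)"
  by (auto simp: sig_def fun_eq_iff)

lemma NN_sig: "u \<in> NN n d x y \<Longrightarrow> sig x y u \<in> NN n d y x \<and> sig y x (sig x y u) = u"
proof -
  assume "u \<in> NN n d x y"
  then obtain j s where a: "j<n" "s \<in> Om n d j" "s \<noteq> x j" "s \<noteq> y j" "u = x(j:=s)" by (auto simp: NN_def)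
  then have "sig x y u = y(j:=s)" by (simp add: sig_upd)
  then show ?thesis using a by (auto simp: NN_def sig_upd)
qed

lemma I2_sym: "(u \<in> NN n d x y \<and> v = sig x y u) \<longleftrightarrow> (v \<in> NN n d y x \<and> u = sig y x v)"
  using NN_sig[of u n d x y] NN_sig[of v n d y x] by auto

lemma NN_V: "x \<in> VV n d \<Longrightarrow> NN n d x y \<subseteq> VV n d"
  by (auto simp: NN_def intro: upd_V)

lemma Sp_V: "x \<in> VV n d \<Longrightarrow> y \<in> VV n d \<Longrightarrow> Sp x y \<subseteq> VV n d"
  using ball_char by blast

lemma rowI2:
  assumes xV: "x \<in> VV n d" and yV: "y \<in> VV n d"
  shows "(\<Sum>v\<in>VV n d. if u \<in> NN n d x y \<and> v = sig x y u then 1 else (0::real)) = (if u \<in> NN n d x y then 1 else 0)"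
proof (cases "u \<in> NN n d x y")
  case True
  then have "sig x y u \<in> NN n d y x" using NN_sig by blast
  then have "sig x y u \<in> VV n d" using NN_V[OF yV] by blast
  then show ?thesis using True by (simp add: finite_V)
qed simp

lemma sum_if_card: "finite A \<Longrightarrow> (\<Sum>v\<in>A. if P v then 1 else (0::real)) = real (card {v\<in>A. P v})"
  by (simp add: sum.If_cases Int_def)

lemma upd_inj: "a \<noteq> x j \<Longrightarrow> x(j := a) = x(l := b) \<Longrightarrow> j = l"
proof (rule ccontr)
  assume a: "a \<noteq> x j" "x(j := a) = x(l := b)" "j \<noteq> l"
  have "(x(j := a)) j = a" by simp
  moreover have "(x(l := b)) j = x j" using a(3) by simp
  ultimately show False using a(1,2) by simp
qed

lemma I3I:
  assumes "j \<in> dset x y" "l \<in> dset x y" "j \<noteq> l"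
  shows "I3 x y (x(j:=y j)) (y(l := x l))"
  unfolding I3_def
proof (rule bexI)
  show "\<exists>la\<in>dset x y. j \<noteq> la \<and> x(j:=y j) = x(j := y j) \<and> y(l := x l) = y(la := x la)"
  proof (rule bexI)
    show "j \<noteq> l \<and> x(j:=y j) = x(j := y j) \<and> y(l := x l) = y(l := x l)" using assms(3) by simp
    show "l \<in> dset x y" by fact
  qed
  show "j \<in> dset x y" by fact
qed

lemma rowI3:
  assumes xV: "x \<in> VV n d" and yV: "y \<in> VV n d"
  shows "(\<Sum>v\<in>VV n d. if I3 x y u v then 1 else (0::real)) = (if u \<in> Sp x y then real (card (dset x y)) - 1 else 0)"
proof (cases "u \<in> Sp x y")
  case True
  then obtain j where j: "j \<in> dset x y" "u = x(j := y j)" by (auto simp: Sp_def)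
  have fin: "finite (dset x y)" using finite_dset[OF xV yV] .
  have "{v \<in> VV n d. I3 x y u v} = (\<lambda>l. y(l := x l)) ` (dset x y - {j})"
  proof (safe)
    fix v assume "v \<in> VV n d" "I3 x y u v"
    then obtain j' l where a: "j' \<in> dset x y" "l \<in> dset x y" "j' \<noteq> l" "u = x(j':=y j')" "v = y(l := x l)"
      unfolding I3_def by blast
    have "y j \<noteq> x j" using j(1) by (simp add: dset_def)
    moreover have "x(j := y j) = x(j' := y j')" using j(2) a(4) by simp
    ultimately have "j = j'" by (rule upd_inj)
    then have "l \<in> dset x y - {j}" using a by simp
    then show "v \<in> (\<lambda>l. y(l := x l)) ` (dset x y - {j})" using a(5) by (rule rev_image_eqI)
  next
    fix l assume l: "l \<in> dset x y" "l \<notin> {}" "l \<noteq> j"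
    have "l < n" using l dset_sub[OF xV yV] by blast
    then show "y(l := x l) \<in> VV n d" using yV xV by (intro upd_V) (auto simp: V_iff)
    show "I3 x y u (y(l := x l))" using I3I[of j x y l] l j by simp
  qed
  moreover have "inj_on (\<lambda>l. y(l := x l)) (dset x y - {j})"
  proof (rule inj_onI)
    fix a b assume "a \<in> dset x y - {j}" "b \<in> dset x y - {j}" "y(a := x a) = y(b := x b)"
    moreover have "x a \<noteq> y a" using \<open>a \<in> dset x y - {j}\<close> by (simp add: dset_def)
    ultimately show "a = b" using upd_inj[of "x a" y a b "x b"] by simp
  qed
  ultimately have "card {v \<in> VV n d. I3 x y u v} = card (dset x y) - 1"
    using j fin by (simp add: card_image)
  moreover have "card (dset x y) \<noteq> 0" using j fin by auto
  then have "card (dset x y) \<ge> 1" by simp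
  ultimately show ?thesis using True by (simp add: sum_if_card finite_V of_nat_diff)
next
  case False
  have nI: "\<not> I3 x y u v" for v using False unfolding I3_def Sp_def by blast
  show ?thesis using False by (simp add: nI)
qed

lemma I3_sym: "I3 x y u v \<longleftrightarrow> I3 y x v u"
proof
  assume "I3 x y u v"
  then obtain j l where a: "j \<in> dset x y" "l \<in> dset x y" "j \<noteq> l" "u = x(j:=y j)" "v = y(l := x l)"
    unfolding I3_def by blast
  have "l \<in> dset y x" "j \<in> dset y x" using a(1,2) dset_sym by auto
  then show "I3 y x v u" using I3I[of l y x j] a(3-5) by simp
next
  assume "I3 y x v u"
  then obtain j l where a: "j \<in> dset y x" "l \<in> dset y x" "j \<noteq> l" "v = y(j:=x j)" "u = x(l := y l)"
    unfolding I3_def by blast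
  have "l \<in> dset x y" "j \<in> dset x y" using a(1,2) dset_sym by auto
  then show "I3 x y u v" using I3I[of l x y j] a(3-5) by simp
qed

lemma card_Sp: "finite (dset x y) \<Longrightarrow> card (Sp x y) = card (dset x y)"
proof -
  assume f: "finite (dset x y)"
  have "Sp x y = (\<lambda>j. x(j := y j)) ` dset x y" by (auto simp: Sp_def)
  moreover have "inj_on (\<lambda>j. x(j := y j)) (dset x y)"
  proof (rule inj_onI)
    fix a b assume "a \<in> dset x y" "b \<in> dset x y" "x(a := y a) = x(b := y b)"
    moreover have "y a \<noteq> x a" using \<open>a \<in> dset x y\<close> by (simp add: dset_def)
    ultimately show "a = b" using upd_inj[of "y a" x a b "y b"] by simp
  qed
  ultimately show ?thesis by (simp add: card_image)
qed

lemma I3_dist: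
  assumes xV: "x \<in> VV n d" and yV: "y \<in> VV n d" and "I3 x y u v"
  shows "ham u v = card (dset x y) - 2"
proof -
  obtain j l where a: "j \<in> dset x y" "l \<in> dset x y" "j \<noteq> l" "u = x(j:=y j)" "v = y(l := x l)"
    using assms(3) by (auto simp: I3_def)
  have "dset u v = dset x y - {j, l}" using a by (auto simp: dset_def)
  then show ?thesis using a finite_dset[OF xV yV] by (simp add: ham_def card_Diff_subset)
qed

lemma NN_reindex:
  "(\<Sum>u\<in>NN n d x y. f u) = (\<Sum>j<n. \<Sum>s\<in>Om n d j - {x j, y j}. f (x(j:=s)))"
proof -
  have e: "NN n d x y = (\<lambda>(j,s). x(j:=s)) ` (SIGMA j:{..<n}. Om n d j - {x j, y j})"
    by (auto simp: NN_def)
  have i: "inj_on (\<lambda>(j,s). x(j:=s)) (SIGMA j:{..<n}. Om n d j - {x j, y j})"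
  proof (rule inj_onI)
    fix a b assume a: "a \<in> (SIGMA j:{..<n}. Om n d j - {x j, y j})" "b \<in> (SIGMA j:{..<n}. Om n d j - {x j, y j})"
      and e: "(\<lambda>(j,s). x(j:=s)) a = (\<lambda>(j,s). x(j:=s)) b"
    obtain j s where ja: "a = (j, s)" by (cases a)
    obtain j' s' where jb: "b = (j', s')" by (cases b)
    have ne: "s \<noteq> x j" using a(1) ja by simp
    have e2: "x(j:=s) = x(j':=s')" using e ja jb by simp
    have "j = j'" using upd_inj[OF ne e2] .
    moreover have "s = s'" using arg_cong[OF e2, of "\<lambda>f. f j"] \<open>j = j'\<close> by simp
    ultimately show "a = b" using ja jb by simp
  qed
  show ?thesis unfolding e sum.reindex[OF i]
    by (subst sum.Sigma) (auto simp: finite_Om split_def)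
qed



lemma ham_pair: "ham (x(j:=s)) (y(j:=s)) = card (dset x y - {j})"
proof -
  have "dset (x(j:=s)) (y(j:=s)) = dset x y - {j}" by (auto simp: dset_def)
  then show ?thesis by (simp add: ham_def)
qed

lemma if_mult1: "(if P then 1 else 0) * (h::real) = (if P then h else 0)" by simp

lemma C2:
  assumes xV: "x \<in> VV n d" and yV: "y \<in> VV n d"
  shows "(\<Sum>u\<in>VV n d. \<Sum>v\<in>VV n d. (if u \<in> NN n d x y \<and> v = sig x y u then 1 else 0) * real (ham u v))
     = (\<Sum>j<n. real (card (Om n d j - {x j, y j})) * real (card (dset x y - {j})))"
proof -
  have inner: "(\<Sum>v\<in>VV n d. (if u \<in> NN n d x y \<and> v = sig x y u then 1 else 0) * real (ham u v))
     = (if u \<in> NN n d x y then real (ham u (sig x y u)) else 0)" for u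
  proof (cases "u \<in> NN n d x y")
    case True
    then have "sig x y u \<in> VV n d" using NN_sig NN_V[OF yV] by blast
    then show ?thesis using True by (simp add: finite_V if_mult1)
  qed simp
  have "(\<Sum>u\<in>VV n d. \<Sum>v\<in>VV n d. (if u \<in> NN n d x y \<and> v = sig x y u then 1 else 0) * real (ham u v))
     = (\<Sum>u\<in>VV n d. if u \<in> NN n d x y then real (ham u (sig x y u)) else 0)"
    by (simp add: inner)
  also have "\<dots> = (\<Sum>u\<in>NN n d x y. real (ham u (sig x y u)))"
    using NN_V[OF xV, of y] by (simp add: sum.If_cases finite_V Int_absorb1 Int_def[symmetric])
  also have "\<dots> = (\<Sum>j<n. \<Sum>s\<in>Om n d j - {x j, y j}. real (ham (x(j:=s)) (sig x y (x(j:=s)))))"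
    by (rule NN_reindex)
  also have "\<dots> = (\<Sum>j<n. \<Sum>s\<in>Om n d j - {x j, y j}. real (card (dset x y - {j})))"
    by (intro sum.cong refl) (simp add: sig_upd ham_pair)
  also have "\<dots> = (\<Sum>j<n. real (card (Om n d j - {x j, y j})) * real (card (dset x y - {j})))"
    by simp
  finally show ?thesis .
qed

lemma C3:
  assumes xV: "x \<in> VV n d" and yV: "y \<in> VV n d"
  shows "(\<Sum>u\<in>VV n d. \<Sum>v\<in>VV n d. (if I3 x y u v then 1 else 0) * real (ham u v))
     = real (card (dset x y)) * (real (card (dset x y)) - 1) * real (card (dset x y) - 2)"
proof -
  let ?k = "card (dset x y)"
  have "(\<Sum>u\<in>VV n d. \<Sum>v\<in>VV n d. (if I3 x y u v then 1 else 0) * real (ham u v))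
     = (\<Sum>u\<in>VV n d. \<Sum>v\<in>VV n d. (if I3 x y u v then 1 else 0) * real (?k - 2))"
    by (intro sum.cong refl) (auto simp: I3_dist[OF xV yV])
  also have "\<dots> = real (?k - 2) * (\<Sum>u\<in>VV n d. \<Sum>v\<in>VV n d. (if I3 x y u v then 1 else 0))"
    by (simp add: sum_distrib_left mult.commute)
  also have "\<dots> = real (?k - 2) * (\<Sum>u\<in>VV n d. if u \<in> Sp x y then real ?k - 1 else 0)"
    by (simp add: rowI3[OF xV yV])
  also have "\<dots> = real (?k - 2) * (real (card (Sp x y)) * (real ?k - 1))"
    using Sp_V[OF xV yV] by (simp add: sum.If_cases finite_V Int_absorb1 Int_def[symmetric])
  finally show ?thesis using card_Sp[OF finite_dset[OF xV yV]] by simp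
qed

lemma C1:
  assumes xV: "x \<in> VV n d" and yV: "y \<in> VV n d"
  shows "(\<Sum>u\<in>VV n d. \<Sum>v\<in>VV n d. (if u = x \<and> v = a then 1 else 0) * real (ham u v)) = (if a \<in> VV n d then real (ham x a) else 0)"
proof -
  have "(\<Sum>u\<in>VV n d. \<Sum>v\<in>VV n d. (if u = x \<and> v = a then 1 else 0) * real (ham u v))
      = (\<Sum>u\<in>VV n d. if u = x then (if a \<in> VV n d then real (ham x a) else 0) else 0)"
  proof (intro sum.cong refl)
    fix u show "(\<Sum>v\<in>VV n d. (if u = x \<and> v = a then 1 else 0) * real (ham u v))
       = (if u = x then (if a \<in> VV n d then real (ham x a) else 0) else 0)"
      by (cases "u = x") (simp_all add: if_mult1 finite_V)
  qed
  also have "\<dots> = (if a \<in> VV n d then real (ham x a) else 0)" using xV by (simp add: finite_V)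
  finally show ?thesis .
qed

lemma C2_eval:
  assumes xV: "x \<in> VV n d" and yV: "y \<in> VV n d"
  shows "(\<Sum>j<n. real (card (Om n d j - {x j, y j})) * real (card (dset x y - {j})))
     = real (card (dset x y)) * ((real (n - 1 choose d) - 2) * (real (card (dset x y)) - 1))
       + (real n - real (card (dset x y))) * (real (n - 1 choose d) - 1) * real (card (dset x y))"
proof -
  let ?S = "dset x y" let ?k = "card (dset x y)" let ?D = "n - 1 choose d"
  have Ssub: "?S \<subseteq> {..<n}" using dset_sub[OF xV yV] .
  have finS: "finite ?S" using finite_dset[OF xV yV] .
  have g: "real (card (Om n d j - {x j, y j})) * real (card (?S - {j}))
      = (if j \<in> ?S then (real ?D - 2) * (real ?k - 1) else (real ?D - 1) * real ?k)" if j: "j < n" for j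
  proof -
    have sub: "{x j, y j} \<subseteq> Om n d j" using xV yV j by (auto simp: V_iff)
    have "card {x j, y j} \<le> card (Om n d j)" using sub finite_Om by (rule card_mono[rotated])
    then have c1: "real (card (Om n d j - {x j, y j})) = real ?D - real (card {x j, y j})"
      using sub finite_Om card_Om[OF j] by (simp add: card_Diff_subset of_nat_diff)
    show ?thesis
    proof (cases "j \<in> ?S")
      case True
      then have "x j \<noteq> y j" by (simp add: dset_def)
      moreover have "?k \<ge> 1" using True finS by (metis One_nat_def Suc_leI card_gt_0_iff empty_iff)
      ultimately show ?thesis using c1 True finS by (simp add: of_nat_diff)
    next
      case False
      then have "x j = y j" by (simp add: dset_def)
      then show ?thesis using c1 False by simp
    qed
  qed
  have "(\<Sum>j<n. real (card (Om n d j - {x j, y j})) * real (card (?S - {j})))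
     = (\<Sum>j<n. if j \<in> ?S then (real ?D - 2) * (real ?k - 1) else (real ?D - 1) * real ?k)"
    by (intro sum.cong refl) (simp add: g)
  also have "\<dots> = real (card ({..<n} \<inter> ?S)) * ((real ?D - 2) * (real ?k - 1))
        + real (card ({..<n} - ?S)) * ((real ?D - 1) * real ?k)"
    by (simp add: sum.If_cases Int_def[symmetric] Diff_eq[symmetric])
  also have "card ({..<n} \<inter> ?S) = ?k" using Ssub by (simp add: Int_absorb1)
  also have "real (card ({..<n} - ?S)) = real n - real ?k"
  proof -
    have "?k \<le> card {..<n}" using card_mono[OF _ Ssub] by simp
    then show ?thesis using Ssub finS by (simp add: card_Diff_subset of_nat_diff)
  qed
  finally show ?thesis by (simp add: algebra_simps)
qed



definition Acp :: "real \<Rightarrow> real \<Rightarrow> nat \<Rightarrow> nat \<Rightarrow> (nat\<Rightarrow>nat set) \<Rightarrow> (nat\<Rightarrow>nat set) \<Rightarrow> (nat\<Rightarrow>nat set) \<Rightarrow> (nat\<Rightarrow>nat set) \<Rightarrow> real" where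
  "Acp p c n d x y u v = p * ((if u = x \<and> v = y then 1 else 0) + (if u \<in> NN n d x y \<and> v = sig x y u then 1 else 0)
      + c * (if I3 x y u v then 1 else 0))"

definition Bcp :: "real \<Rightarrow> nat \<Rightarrow> nat \<Rightarrow> (nat\<Rightarrow>nat set) \<Rightarrow> (nat\<Rightarrow>nat set) \<Rightarrow> (nat\<Rightarrow>nat set) \<Rightarrow> (nat\<Rightarrow>nat set) \<Rightarrow> real" where
  "Bcp p n d x y u v = p * ((if u = x \<and> v = x then 1 else 0) + (if u = y \<and> v = y then 1 else 0)
      + (if u \<in> NN n d x y \<and> v = sig x y u then 1 else 0))"

lemma Acp_sym: "Acp p c n d x y u v = Acp p c n d y x v u"
  unfolding Acp_def I3_sym[of x y u v] I2_sym[of u n d x y v] by (simp add: conj_commute)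

lemma Bcp_sym: "Bcp p n d x y u v = Bcp p n d y x v u"
  unfolding Bcp_def I2_sym[of u n d x y v] by (simp add: conj_commute add_ac)

lemma walk_decomp:
  assumes xV: "x \<in> VV n d" and yV: "y \<in> VV n d" and uV: "u \<in> VV n d"
  shows "walkH n d x u = (1 / (real n * (real (n - 1 choose d) - 1) + 1)) *
    ((if u = x then 1 else 0) + (if u \<in> NN n d x y then 1 else 0) + (if u \<in> Sp x y then 1 else 0))"
proof -
  have e: "(uV \<in> VV n d \<and> ham x uV \<le> 1) \<longleftrightarrow> (uV = x \<or> uV \<in> NN n d x y \<or> uV \<in> Sp x y)" for uV
    using ball_char[OF xV yV] .
  show ?thesis
  proof (cases "u = x")
    case True
    then show ?thesis using e[of u] uV x_notin_NN[of x n d y] x_notin_Sp[of x y] by (simp add: walk_eq[OF xV])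
  next
    case False
    show ?thesis
    proof (cases "u \<in> NN n d x y")
      case True
      then have "u \<notin> Sp x y" using NN_Sp_disj[of n d x y] by blast
      then show ?thesis using e[of u] uV True False by (simp add: walk_eq[OF xV])
    next
      case F2: False
      then show ?thesis using e[of u] uV False by (simp add: walk_eq[OF xV])
    qed
  qed
qed

lemma sum_pair_ind:
  assumes "y \<in> VV n d"
  shows "(\<Sum>v\<in>VV n d. if u = x \<and> v = y then 1 else (0::real)) = (if u = x then 1 else 0)"
  using assms by (cases "u = x") (simp_all add: finite_V)

lemma Acp_row:
  assumes xV: "x \<in> VV n d" and yV: "y \<in> VV n d" and uV: "u \<in> VV n d"
    and k2: "card (dset x y) \<ge> 2"
  shows "(\<Sum>v\<in>VV n d. Acp p (1 / (real (card (dset x y)) - 1)) n d x y u v) =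
    p * ((if u = x then 1 else 0) + (if u \<in> NN n d x y then 1 else 0) + (if u \<in> Sp x y then 1 else 0))"
proof -
  let ?c = "1 / (real (card (dset x y)) - 1)"
  have "(\<Sum>v\<in>VV n d. Acp p ?c n d x y u v) = p * ((\<Sum>v\<in>VV n d. if u = x \<and> v = y then 1 else 0)
     + (\<Sum>v\<in>VV n d. if u \<in> NN n d x y \<and> v = sig x y u then 1 else 0)
     + ?c * (\<Sum>v\<in>VV n d. if I3 x y u v then 1 else 0))"
    unfolding Acp_def by (simp only: sum_distrib_left[symmetric] sum.distrib)
  also have "\<dots> = p * ((if u = x then 1 else 0) + (if u \<in> NN n d x y then 1 else 0)
     + ?c * (if u \<in> Sp x y then real (card (dset x y)) - 1 else 0))"
    by (simp only: sum_pair_ind[OF yV] rowI2[OF xV yV] rowI3[OF xV yV])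
  also have "?c * (if u \<in> Sp x y then real (card (dset x y)) - 1 else 0) = (if u \<in> Sp x y then 1 else 0)"
  proof -
    have "real (card (dset x y)) - 1 \<noteq> 0" using k2 by simp
    then show ?thesis by simp
  qed
  finally show ?thesis .
qed

lemma Sp_single:
  assumes "dset x y = {j}"
  shows "Sp x y = {y}"
proof -
  have "x(j := y j) = y"
  proof
    fix i show "(x(j := y j)) i = y i"
      using assms by (cases "i = j") (auto simp: dset_def)
  qed
  then show ?thesis using assms by (simp add: Sp_def)
qed

lemma Bcp_row:
  assumes xV: "x \<in> VV n d" and yV: "y \<in> VV n d" and uV: "u \<in> VV n d"
    and k1: "card (dset x y) = 1"
  shows "(\<Sum>v\<in>VV n d. Bcp p n d x y u v) =
    p * ((if u = x then 1 else 0) + (if u \<in> NN n d x y then 1 else 0) + (if u \<in> Sp x y then 1 else 0))"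
proof -
  obtain j where j: "dset x y = {j}" using k1 by (meson card_1_singletonE)
  have "(\<Sum>v\<in>VV n d. Bcp p n d x y u v) = p * ((\<Sum>v\<in>VV n d. if u = x \<and> v = x then 1 else 0)
     + (\<Sum>v\<in>VV n d. if u = y \<and> v = y then 1 else 0)
     + (\<Sum>v\<in>VV n d. if u \<in> NN n d x y \<and> v = sig x y u then 1 else 0))"
    unfolding Bcp_def by (simp only: sum_distrib_left[symmetric] sum.distrib)
  also have "\<dots> = p * ((if u = x then 1 else 0) + (if u = y then 1 else 0) + (if u \<in> NN n d x y then 1 else 0))"
    by (simp only: sum_pair_ind[OF yV] sum_pair_ind[OF xV] rowI2[OF xV yV])
  finally show ?thesis using Sp_single[OF j] by (simp add: add_ac)
qed

lemma transport_le:
  assumes "finite V" and c: "coupling V m1 m2 A" and dpos: "\<forall>u\<in>V. \<forall>v\<in>V. \<delta> u v \<ge> 0"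
  shows "transport_dist V \<delta> m1 m2 \<le> (\<Sum>x\<in>V. \<Sum>y\<in>V. A x y * \<delta> x y)"
  unfolding transport_dist_def
proof (rule cInf_lower)
  show "(\<Sum>x\<in>V. \<Sum>y\<in>V. A x y * \<delta> x y) \<in> {\<Sum>x\<in>V. \<Sum>y\<in>V. A x y * \<delta> x y |A. coupling V m1 m2 A}"
    using c by blast
  show "bdd_below {\<Sum>x\<in>V. \<Sum>y\<in>V. A x y * \<delta> x y |A. coupling V m1 m2 A}"
  proof (rule bdd_belowI[where m=0], clarify)
    fix A' assume "coupling V m1 m2 A'"
    then have "\<forall>x\<in>V. \<forall>y\<in>V. 0 \<le> A' x y" by (simp add: coupling_def)
    then show "0 \<le> (\<Sum>x\<in>V. \<Sum>y\<in>V. A' x y * \<delta> x y)" using dpos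
      by (intro sum_nonneg mult_nonneg_nonneg) auto
  qed
qed



lemma Acp_cost:
  "(\<Sum>u\<in>VV n d. \<Sum>v\<in>VV n d. Acp p c n d x y u v * real (ham u v)) =
    p * (\<Sum>u\<in>VV n d. \<Sum>v\<in>VV n d. (if u = x \<and> v = y then 1 else 0) * real (ham u v))
  + p * (\<Sum>u\<in>VV n d. \<Sum>v\<in>VV n d. (if u \<in> NN n d x y \<and> v = sig x y u then 1 else 0) * real (ham u v))
  + (p * c) * (\<Sum>u\<in>VV n d. \<Sum>v\<in>VV n d. (if I3 x y u v then 1 else 0) * real (ham u v))"
proof -
  have pw: "Acp p c n d x y u v * real (ham u v) =
     p * ((if u = x \<and> v = y then 1 else 0) * real (ham u v))
   + p * ((if u \<in> NN n d x y \<and> v = sig x y u then 1 else 0) * real (ham u v))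
   + (p * c) * ((if I3 x y u v then 1 else 0) * real (ham u v))" for u v
    unfolding Acp_def by (simp only: distrib_left distrib_right mult.assoc mult.left_commute)
  show ?thesis by (simp only: pw sum.distrib sum_distrib_left[symmetric])
qed

lemma Bcp_cost:
  "(\<Sum>u\<in>VV n d. \<Sum>v\<in>VV n d. Bcp p n d x y u v * real (ham u v)) =
    p * (\<Sum>u\<in>VV n d. \<Sum>v\<in>VV n d. (if u = x \<and> v = x then 1 else 0) * real (ham u v))
  + p * (\<Sum>u\<in>VV n d. \<Sum>v\<in>VV n d. (if u = y \<and> v = y then 1 else 0) * real (ham u v))
  + p * (\<Sum>u\<in>VV n d. \<Sum>v\<in>VV n d. (if u \<in> NN n d x y \<and> v = sig x y u then 1 else 0) * real (ham u v))"
proof -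
  have pw: "Bcp p n d x y u v * real (ham u v) =
     p * ((if u = x \<and> v = x then 1 else 0) * real (ham u v))
   + p * ((if u = y \<and> v = y then 1 else 0) * real (ham u v))
   + p * ((if u \<in> NN n d x y \<and> v = sig x y u then 1 else 0) * real (ham u v))" for u v
    unfolding Bcp_def by (simp only: distrib_left distrib_right mult.assoc mult.left_commute)
  show ?thesis by (simp only: pw sum.distrib sum_distrib_left[symmetric])
qed

theorem mainTheorem8:
  fixes n d :: nat and G1 G2 :: "nat \<Rightarrow> nat set"
  assumes "3 \<le> n" and "1 \<le> d" and "d \<le> n - 2"
    and "G1 \<in> out_regular_digraphs n d" and "G2 \<in> out_regular_digraphs n d"
    and "G1 \<noteq> G2"
  shows "ollivier_ricci (out_regular_digraphs n d) (adjH n d) (walkH n d) G1 G2 \<ge> 1 / real n"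
proof -
  note xV = assms(4) and yV = assms(5)
  define k where "k = card (dset G1 G2)"
  define D where "D = (n - 1 choose d)"
  define p where "p = 1 / (real n * (real D - 1) + 1)"
  have fS: "finite (dset G1 G2)" using finite_dset[OF xV yV] .
  have k1: "k \<ge> 1"
  proof -
    have "ham G1 G2 \<noteq> 0" using ham_0[OF xV yV] assms(6) by simp
    then show ?thesis by (simp add: k_def ham_def)
  qed
  have Dpos: "real D \<ge> 1"
  proof -
    have "G1 0 \<in> Om n d 0" using xV assms(1) by (simp add: V_iff)
    then have "card (Om n d 0) \<noteq> 0" using finite_Om[of n d 0] by auto
    moreover have "card (Om n d 0) = D" using card_Om[of 0 n d] assms(1) by (simp add: D_def)
    ultimately have "D \<ge> 1" by simp
    then show ?thesis by simp
  qed
  have Mnn: "real n * (real D - 1) \<ge> 0" using Dpos by simp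
  have ppos: "p > 0" unfolding p_def using Mnn by simp
  have wx: "walkH n d G1 u = p * ((if u = G1 then 1 else 0) + (if u \<in> NN n d G1 G2 then 1 else 0) + (if u \<in> Sp G1 G2 then 1 else 0))"
    if "u \<in> VV n d" for u using walk_decomp[OF xV yV that] by (simp add: p_def D_def)
  have wy: "walkH n d G2 u = p * ((if u = G2 then 1 else 0) + (if u \<in> NN n d G2 G1 then 1 else 0) + (if u \<in> Sp G2 G1 then 1 else 0))"
    if "u \<in> VV n d" for u using walk_decomp[OF yV xV that] by (simp add: p_def D_def)
  have c2: "(\<Sum>u\<in>VV n d. \<Sum>v\<in>VV n d. (if u \<in> NN n d G1 G2 \<and> v = sig G1 G2 u then 1 else 0) * real (ham u v))
     = real k * ((real D - 2) * (real k - 1)) + (real n - real k) * (real D - 1) * real k"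
    using C2[OF xV yV] C2_eval[OF xV yV] by (simp add: k_def D_def)
  obtain A where cA: "coupling (VV n d) (walkH n d G1) (walkH n d G2) A"
    and costA: "(\<Sum>u\<in>VV n d. \<Sum>v\<in>VV n d. A u v * real (ham u v)) = p * real k * ((real n - 1) * (real D - 1))"
  proof (cases "k = 1")
    case True
    let ?A = "Bcp p n d G1 G2"
    have k1': "card (dset G1 G2) = 1" "card (dset G2 G1) = 1" using True by (simp_all add: k_def dset_sym)
    have "coupling (VV n d) (walkH n d G1) (walkH n d G2) ?A"
      unfolding coupling_def
    proof (intro conjI ballI)
      fix u v assume "u \<in> VV n d" "v \<in> VV n d"
      show "0 \<le> ?A u v" unfolding Bcp_def using ppos by (intro mult_nonneg_nonneg add_nonneg_nonneg) auto
    next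
      fix u assume u: "u \<in> VV n d"
      show "(\<Sum>v\<in>VV n d. ?A u v) = walkH n d G1 u" using Bcp_row[OF xV yV u k1'(1)] wx[OF u] by simp
    next
      fix v assume v: "v \<in> VV n d"
      have "(\<Sum>u\<in>VV n d. ?A u v) = (\<Sum>u\<in>VV n d. Bcp p n d G2 G1 v u)" by (simp add: Bcp_sym)
      also have "\<dots> = walkH n d G2 v" using Bcp_row[OF yV xV v k1'(2)] wy[OF v] by simp
      finally show "(\<Sum>u\<in>VV n d. ?A u v) = walkH n d G2 v" .
    qed
    moreover have "(\<Sum>u\<in>VV n d. \<Sum>v\<in>VV n d. ?A u v * real (ham u v)) = p * real k * ((real n - 1) * (real D - 1))"
    proof -
      have z1: "(\<Sum>u\<in>VV n d. \<Sum>v\<in>VV n d. (if u = G1 \<and> v = G1 then 1 else 0) * real (ham u v)) = 0"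
        using C1[OF xV xV, of G1] xV ham_0[OF xV xV] by simp
      have z2: "(\<Sum>u\<in>VV n d. \<Sum>v\<in>VV n d. (if u = G2 \<and> v = G2 then 1 else 0) * real (ham u v)) = 0"
        using C1[OF yV yV, of G2] yV ham_0[OF yV yV] by simp
      show ?thesis unfolding Bcp_cost z1 z2 c2 using True by (simp add: algebra_simps)
    qed
    ultimately show ?thesis using that by blast
  next
    case False
    then have k2: "k \<ge> 2" using k1 by simp
    define c where "c = 1 / (real k - 1)"
    let ?A = "Acp p c n d G1 G2"
    have k2': "card (dset G1 G2) \<ge> 2" "card (dset G2 G1) \<ge> 2" using k2 by (simp_all add: k_def dset_sym)
    have cdef2: "c = 1 / (real (card (dset G2 G1)) - 1)" by (simp add: c_def k_def dset_sym)
    have "coupling (VV n d) (walkH n d G1) (walkH n d G2) ?A"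
      unfolding coupling_def
    proof (intro conjI ballI)
      fix u v assume "u \<in> VV n d" "v \<in> VV n d"
      have "c \<ge> 0" using k2 by (simp add: c_def)
      then show "0 \<le> ?A u v" unfolding Acp_def using ppos by (intro mult_nonneg_nonneg add_nonneg_nonneg) auto
    next
      fix u assume u: "u \<in> VV n d"
      show "(\<Sum>v\<in>VV n d. ?A u v) = walkH n d G1 u" using Acp_row[OF xV yV u k2'(1), of p] wx[OF u] by (simp add: c_def k_def)
    next
      fix v assume v: "v \<in> VV n d"
      have "(\<Sum>u\<in>VV n d. ?A u v) = (\<Sum>u\<in>VV n d. Acp p c n d G2 G1 v u)" by (simp add: Acp_sym)
      also have "\<dots> = walkH n d G2 v" using Acp_row[OF yV xV v k2'(2), of p] wy[OF v] by (simp add: cdef2)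
      finally show "(\<Sum>u\<in>VV n d. ?A u v) = walkH n d G2 v" .
    qed
    moreover have "(\<Sum>u\<in>VV n d. \<Sum>v\<in>VV n d. ?A u v * real (ham u v)) = p * real k * ((real n - 1) * (real D - 1))"
    proof -
      have z1: "(\<Sum>u\<in>VV n d. \<Sum>v\<in>VV n d. (if u = G1 \<and> v = G2 then 1 else 0) * real (ham u v)) = real k"
        using C1[OF xV yV, of G2] yV by (simp add: k_def ham_def)
      have z3: "(\<Sum>u\<in>VV n d. \<Sum>v\<in>VV n d. (if I3 G1 G2 u v then 1 else 0) * real (ham u v)) = real k * (real k - 1) * (real k - 2)"
        using C3[OF xV yV] k2 by (simp add: k_def of_nat_diff)
      have cc: "c * (real k * (real k - 1) * (real k - 2)) = real k * (real k - 2)"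
      proof -
        have "real k - 1 \<noteq> 0" using k2 by simp
        then show ?thesis by (simp add: c_def)
      qed
      have "(\<Sum>u\<in>VV n d. \<Sum>v\<in>VV n d. ?A u v * real (ham u v)) =
          p * real k + p * (real k * ((real D - 2) * (real k - 1)) + (real n - real k) * (real D - 1) * real k)
          + p * (c * (real k * (real k - 1) * (real k - 2)))"
        unfolding Acp_cost z1 z3 c2 by (simp add: mult.assoc)
      also have "\<dots> = p * real k * ((real n - 1) * (real D - 1))"
        unfolding cc by (simp add: algebra_simps)
      finally show ?thesis .
    qed
    ultimately show ?thesis using that by blast
  qed
  have gd: "graph_dist (adjH n d) G1 G2 = k" using gdist[OF xV yV] by (simp add: k_def ham_def)
  have "transport_dist (VV n d) (\<lambda>u v. real (graph_dist (adjH n d) u v)) (walkH n d G1) (walkH n d G2)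
      \<le> (\<Sum>u\<in>VV n d. \<Sum>v\<in>VV n d. A u v * real (graph_dist (adjH n d) u v))"
    by (rule transport_le[OF finite_V cA]) simp
  also have "\<dots> = (\<Sum>u\<in>VV n d. \<Sum>v\<in>VV n d. A u v * real (ham u v))"
    by (intro sum.cong refl) (simp add: gdist)
  finally have W: "transport_dist (VV n d) (\<lambda>u v. real (graph_dist (adjH n d) u v)) (walkH n d G1) (walkH n d G2)
      \<le> p * real k * ((real n - 1) * (real D - 1))" using costA by simp
  define W where "W = transport_dist (VV n d) (\<lambda>u v. real (graph_dist (adjH n d) u v)) (walkH n d G1) (walkH n d G2)"
  have kpos: "real k > 0" using k1 by simp
  have "W / real k \<le> p * ((real n - 1) * (real D - 1))"
    using W kpos unfolding W_def by (simp add: pos_divide_le_eq mult.commute mult.left_commute)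
  also have "\<dots> \<le> 1 - 1 / real n"
  proof -
    have n0: "real n > 0" using assms(1) by simp
    have M0: "real n * (real D - 1) + 1 > 0" using Mnn by simp
    have "(real n - 1) * (real D - 1) * real n \<le> (real n - 1) * (real n * (real D - 1) + 1)"
      using assms(1) by (simp add: algebra_simps)
    then show ?thesis unfolding p_def using n0 M0 by (simp add: field_simps)
  qed
  finally have "W / real k \<le> 1 - 1 / real n" .
  then show ?thesis unfolding ollivier_ricci_def gd W_def[symmetric] by simp
qed


end
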